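(* Fix $N\ge 1$, $L>0$, $\alpha>0$, $p>0$, $\lambda_e>0$ and $\epsilon\in(0,1)$. Let $K_1=\pi\lambda_e\Gamma(\frac{2}{\alpha}+1)$, $K_4=\frac{N\left[(L/N)^\alpha+1\right]}{p}$, and $$R_e^{*}=\log_2\!\left[\frac{2p}{\alpha}\,W_0\!\left(\frac{\alpha}{2}\left[\frac{\ln\frac{1}{1-\epsilon}}{NK_1}\right]^{-\alpha/2}\right)+1\right].$$ Then the function $$\mathbb{U}(R_t)=\frac{(R_t-R_e^* )\exp\!\left[-K_4\left(2^{R_t}-1\right)\right]}{N},\qquad R_t>R_e^*,$$ is quasi-concave with unique maximizer $R_t^*=R_e^*+\frac{1}{\ln2}W_0\!\left(\frac{2^{-R_e^*}}{K_4}\right)$, and consequently the non-on-off-transmission throughput $\mathbb{U}_{\mathrm{NOFT}}=\mathcal{P}_cR_s/N$ is maximized over all $(R_t,R_s)$ with $R_t\ge R_s>0$ and $\mathcal{P}_{\mathrm{so}}\le\epsilon$ by $R_t=R_t^*$ and $$R_s=R_s^*=\frac{1}{\ln2}W_0\!\left(\frac{2^{-R_e^*}}{K_4}\right).$$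
   Context: Setup (linear multihop network). Source and destination are at distance $L$, connected by $N$ equal-length hops of length $L/N$. Fix path-loss exponent $\alpha>0$, transmitter-side SNR $p>0$, eavesdropper density $\lambda_e>0$. Legitimate hop $n$ has received SNR $\mathrm{SNR}_n=\frac{pH_n}{(L/N)^\alpha+1}$ with $H_n$ i.i.d. exponential of mean 1. For each hop $n$, eavesdroppers form independent homogeneous Poisson point processes $\Phi_{ne}$ of intensity $\lambda_e$ on $\mathbb{R}^2$; eavesdropper $e\in\Phi_{ne}$ has SNR $pS_{ne}/(|X_{ne}|^\alpha+1)$, with $|X_{ne}|$ its distance to the hop-$n$ transmitter and $S_{ne}$ i.i.d. Exp(1) independent of everything. Wiretap code rates $R_t\ge R_s>0$, $R_e=R_t-R_s$, $\beta_t=2^{R_t}-1$, $\beta_e=2^{R_e}-1$. The end-to-end secrecy outage probability is $\mathcal{P}_{\mathrm{so}}=\mathbb{P}(\max_n\max_{e\in\Phi_{ne}}\mathrm{SNR}_{ne}>\beta_e)=1-\exp[-NK_1(\beta_e/p)^{-2/\alpha}e^{-\beta_e/p}]$. Non-on-off transmission (NOFT): every hop always transmits; the end-to-end connection probability is $\mathcal{P}_c=\mathbb{P}(\min_n\mathrm{SNR}_n>\beta_t)=\exp[-N\beta_t((L/N)^\alpha+1)/p]$, and the secure transmission throughput is $\mathbb{U}_{\mathrm{NOFT}}=\mathcal{P}_cR_s/N$. $W_0$ denotes the principal branch of the Lambert W function. *)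

theory Defs
  imports "HOL-Analysis.Analysis"
begin

definition lambertW0 :: "real \<Rightarrow> real" where
  "lambertW0 x = (THE w. -1 \<le> w \<and> w * exp w = x)"

definition quasiconcave_on :: "real set \<Rightarrow> (real \<Rightarrow> real) \<Rightarrow> bool" where
  "quasiconcave_on S f \<longleftrightarrow>
     (\<forall>x\<in>S. \<forall>y\<in>S. \<forall>t::real. 0 \<le> t \<and> t \<le> 1 \<longrightarrow>
        (1 - t) *\<^sub>R x + t *\<^sub>R y \<in> S \<longrightarrow> min (f x) (f y) \<le> f ((1 - t) *\<^sub>R x + t *\<^sub>R y))"

definition K1 :: "real \<Rightarrow> real \<Rightarrow> real" where
  "K1 \<alpha> lam_e = pi * lam_e * Gamma (2 / \<alpha> + 1)"

text \<open>End-to-end secrecy outage probability for rates (R_t, R_s).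
  When R_e = R_t - R_s = 0 we have beta_e = 0 and the exponent is infinite, so P_so = 1.\<close>
definition Pso :: "nat \<Rightarrow> real \<Rightarrow> real \<Rightarrow> real \<Rightarrow> real \<Rightarrow> real \<Rightarrow> real" where
  "Pso N \<alpha> p lam_e Rt Rs =
     (let \<beta>e = 2 powr (Rt - Rs) - 1 in
      if \<beta>e = 0 then 1
      else 1 - exp (- (real N * K1 \<alpha> lam_e * (\<beta>e / p) powr (-2 / \<alpha>) * exp (- \<beta>e / p))))"

definition Pc :: "nat \<Rightarrow> real \<Rightarrow> real \<Rightarrow> real \<Rightarrow> real \<Rightarrow> real" where
  "Pc N L \<alpha> p Rt =
     exp (- (real N * (2 powr Rt - 1) * ((L / real N) powr \<alpha> + 1) / p))"

definition U_NOFT :: "nat \<Rightarrow> real \<Rightarrow> real \<Rightarrow> real \<Rightarrow> real \<Rightarrow> real \<Rightarrow> real" where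
  "U_NOFT N L \<alpha> p Rt Rs = Pc N L \<alpha> p Rt * Rs / real N"

end

theory Submission imports Defs begin

lemma exp_strict: fixes x::real assumes "x \<noteq> 0" shows "1 + x < exp x"
proof (cases "1 + x/2 \<ge> 0")
  case True
  have "(1 + x/2)^2 \<le> exp (x/2) ^ 2"
    using True exp_ge_add_one_self[of "x/2"] by (simp add: power_mono)
  also have "exp (x/2) ^ 2 = exp x" by (simp add: power2_eq_square flip: exp_add)
  finally have "(1+x/2)^2 \<le> exp x" .
  moreover have "1 + x < (1+x/2)^2" using assms by (simp add: power2_eq_square field_simps) (metis not_real_square_gt_zero)
  ultimately show ?thesis by linarith
next
  case False
  then show ?thesis using exp_gt_zero[of x] by linarith
qed

lemma lambertW0_pos:
  assumes "x > 0"
  shows "lambertW0 x > 0 \<and> lambertW0 x * exp (lambertW0 x) = x"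
proof -
  have "\<exists>w. 0 \<le> w \<and> w \<le> x \<and> w * exp w = x"
  proof (rule IVT')
    show "0 * exp 0 \<le> x" using assms by simp
    show "x \<le> x * exp x" using assms by simp
    show "0 \<le> x" using assms by simp
    show "continuous_on {0..x} (\<lambda>w. w * exp w)" by (intro continuous_intros)
  qed
  then obtain w where w: "0 \<le> w" "w * exp w = x" by blast
  have wpos: "w > 0" using w assms by (cases "w = 0") auto
  have uniq: "v = w" if "-1 \<le> v" "v * exp v = x" for v
  proof -
    have vpos: "v > 0"
    proof (rule ccontr)
      assume "\<not> v > 0" then have "v * exp v \<le> 0" by (simp add: mult_nonpos_nonneg)
      then show False using that assms by simp
    qed
    show ?thesis
    proof (rule ccontr)
      assume "v \<noteq> w"
      then consider "v < w" | "w < v" by linarith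
      then show False
      proof cases
        case 1
        then have "v * exp v < w * exp w"
          using vpos by (intro mult_strict_mono) auto
        then show False using that w by simp
      next
        case 2
        then have "w * exp w < v * exp v"
          using wpos by (intro mult_strict_mono) auto
        then show False using that w by simp
      qed
    qed
  qed
  have "lambertW0 x = w"
    unfolding lambertW0_def
    by (rule the_equality) (use w uniq in auto)
  then show ?thesis using wpos w by simp
qed


lemma tangent:
  fixes R k a y :: real
  assumes "a > R" "y > R" "k > 0"
  shows "ln (y-R) - k*2 powr y \<le> ln (a-R) - k*2 powr a + (y-a)*(1/(a-R) - k*2 powr a*ln 2)"
    and "y \<noteq> a \<Longrightarrow> ln (y-R) - k*2 powr y < ln (a-R) - k*2 powr a + (y-a)*(1/(a-R) - k*2 powr a*ln 2)"
proof -
  have "ln ((y-R)/(a-R)) \<le> (y-R)/(a-R) - 1" using assms by (intro ln_le_minus_one) auto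
  also have "(y-R)/(a-R) - 1 = (y-a)/(a-R)" using assms by (simp add: field_simps)
  finally have h1: "ln (y-R) - ln (a-R) \<le> (y-a)*(1/(a-R))" using assms by (simp add: ln_divide_pos)
  have h2: "2 powr y = 2 powr a * exp ((y-a)*ln 2)"
    by (simp add: powr_def flip: exp_add) (simp add: algebra_simps)
  have kp: "k * 2 powr a > 0" using assms by simp
  have e: "k*2 powr a*(1 + (y-a)*ln 2) = k*2 powr a + (y-a)*(k*2 powr a*ln 2)" by (simp add: algebra_simps)
  have "k*2 powr a*(1 + (y-a)*ln 2) \<le> k*2 powr a * exp ((y-a)*ln 2)"
    using kp by (intro mult_left_mono) auto
  then show "ln (y-R) - k*2 powr y \<le> ln (a-R) - k*2 powr a + (y-a)*(1/(a-R) - k*2 powr a*ln 2)"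
    using h1 h2 e by (simp add: algebra_simps)
  assume "y \<noteq> a"
  then have "(y-a)*ln 2 \<noteq> 0" by simp
  then have "k*2 powr a*(1 + (y-a)*ln 2) < k*2 powr a * exp ((y-a)*ln 2)"
    using kp exp_strict by (intro mult_strict_left_mono) auto
  then show "ln (y-R) - k*2 powr y < ln (a-R) - k*2 powr a + (y-a)*(1/(a-R) - k*2 powr a*ln 2)"
    using h1 h2 e by (simp add: algebra_simps)
qed

theorem theorem3:
  fixes N :: nat and L \<alpha> p lam_e \<epsilon> :: real
  assumes "N \<ge> 1" "L > 0" "\<alpha> > 0" "p > 0" "lam_e > 0" "0 < \<epsilon>" "\<epsilon> < 1"
  defines "K4 \<equiv> real N * ((L / real N) powr \<alpha> + 1) / p"
  defines "Re_opt \<equiv> log 2 (2 * p / \<alpha> *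
             lambertW0 (\<alpha> / 2 * (ln (1 / (1 - \<epsilon>)) / (real N * K1 \<alpha> lam_e)) powr (- \<alpha> / 2)) + 1)"
  defines "U \<equiv> (\<lambda>Rt. (Rt - Re_opt) * exp (- K4 * (2 powr Rt - 1)) / real N)"
  defines "Rs_opt \<equiv> lambertW0 (2 powr (- Re_opt) / K4) / ln 2"
  defines "Rt_opt \<equiv> Re_opt + Rs_opt"
  shows "quasiconcave_on {Re_opt<..} U
       \<and> Rt_opt > Re_opt
       \<and> (\<forall>Rt>Re_opt. Rt \<noteq> Rt_opt \<longrightarrow> U Rt < U Rt_opt)
       \<and> (Rt_opt \<ge> Rs_opt \<and> Rs_opt > 0 \<and> Pso N \<alpha> p lam_e Rt_opt Rs_opt \<le> \<epsilon>)
       \<and> (\<forall>Rt Rs. Rt \<ge> Rs \<and> Rs > 0 \<and> Pso N \<alpha> p lam_e Rt Rs \<le> \<epsilon> \<longrightarrow>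
              U_NOFT N L \<alpha> p Rt Rs \<le> U_NOFT N L \<alpha> p Rt_opt Rs_opt)"
proof -
  note a = assms(1-7)
  define c where "c = ln (1 / (1 - \<epsilon>))"
  have c_eq: "c = - ln (1 - \<epsilon>)" using a by (simp add: c_def ln_div)
  have cpos: "c > 0" using a by (simp add: c_def)
  have g2: "2 / \<alpha> + 1 > 0" using a by (simp add: add_pos_pos)
  have K1pos: "K1 \<alpha> lam_e > 0" unfolding K1_def using a g2 by (intro mult_pos_pos Gamma_real_pos) auto
  have Npos: "real N > 0" using a by simp
  define d where "d = c / (real N * K1 \<alpha> lam_e)"
  have dpos: "d > 0" using cpos K1pos Npos by (simp add: d_def)
  define A where "A = \<alpha> / 2 * d powr (- \<alpha> / 2)"
  have Apos: "A > 0" using dpos a by (simp add: A_def)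
  define w1 where "w1 = lambertW0 A"
  have w1: "w1 > 0" "w1 * exp w1 = A" using lambertW0_pos[OF Apos] by (auto simp: w1_def)
  define bs where "bs = 2 * p / \<alpha> * w1"
  have bspos: "bs > 0" using w1 a by (simp add: bs_def)
  have Re_eq: "Re_opt = log 2 (bs + 1)"
    unfolding Re_opt_def bs_def w1_def A_def d_def c_def ..
  have Repos: "Re_opt > 0" using bspos by (simp add: Re_eq)
  have pRe: "2 powr Re_opt = bs + 1" using bspos by (simp add: Re_eq)
  define G where "G = (\<lambda>b. (b/p) powr (-2/\<alpha>) * exp (-b/p))"
  have Gdec: "G b2 < G b1" if "0 < b1" "b1 < b2" for b1 b2
  proof -
    have "(b2/p) powr (-2/\<alpha>) < (b1/p) powr (-2/\<alpha>)"
      using that a by (intro powr_less_mono2_neg) (auto simp: divide_strict_right_mono)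
    moreover have "exp (-b2/p) < exp (-b1/p)" using that a by (simp add: divide_strict_right_mono)
    ultimately show ?thesis unfolding G_def
      using that a by (intro mult_strict_mono) auto
  qed
  have Gbs: "G bs = d"
  proof -
    have "(2*w1/\<alpha>) * exp w1 = d powr (-\<alpha>/2)" using w1(2) a by (simp add: A_def field_simps)
    then have "((2*w1/\<alpha>) * exp w1) powr (-2/\<alpha>) = (d powr (-\<alpha>/2)) powr (-2/\<alpha>)" by simp
    also have "\<dots> = d" using a dpos by (simp add: powr_powr)
    also have "((2*w1/\<alpha>) * exp w1) powr (-2/\<alpha>) = (2*w1/\<alpha>) powr (-2/\<alpha>) * exp (-2*w1/\<alpha>)"
    proof -
      have "((2*w1/\<alpha>) * exp w1) powr (-2/\<alpha>) = (2*w1/\<alpha>) powr (-2/\<alpha>) * exp w1 powr (-2/\<alpha>)"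
        by (rule powr_mult)
      moreover have "exp w1 powr (-2/\<alpha>) = exp (-2*w1/\<alpha>)" by (simp add: powr_def)
      ultimately show ?thesis by simp
    qed
    finally show ?thesis unfolding G_def bs_def using a by simp
  qed
  have Pso_iff: "Pso N \<alpha> p lam_e Rt Rs \<le> \<epsilon> \<longleftrightarrow> real N * K1 \<alpha> lam_e * G b \<le> c"
    if "b = 2 powr (Rt - Rs) - 1" "b > 0" for Rt Rs b
  proof -
    have "Pso N \<alpha> p lam_e Rt Rs = 1 - exp (- (real N * K1 \<alpha> lam_e * G b))"
      unfolding Pso_def Let_def that(1)[symmetric] using that(2) by (simp add: G_def)
    moreover have "1 - exp (-X) \<le> \<epsilon> \<longleftrightarrow> X \<le> c" for X
    proof -
      have "1 - exp (-X) \<le> \<epsilon> \<longleftrightarrow> exp (ln (1-\<epsilon>)) \<le> exp (-X)" using a by auto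
      also have "\<dots> \<longleftrightarrow> X \<le> c" using c_eq by auto
      finally show ?thesis .
    qed
    ultimately show ?thesis by simp
  qed
  have NKd: "real N * K1 \<alpha> lam_e * d = c" using Npos K1pos by (simp add: d_def)
  have constr: "Rt - Rs \<ge> Re_opt" if "Rt \<ge> Rs" "Rs > 0" "Pso N \<alpha> p lam_e Rt Rs \<le> \<epsilon>" for Rt Rs
  proof -
    have "Rt \<noteq> Rs"
    proof
      assume "Rt = Rs" then have "Pso N \<alpha> p lam_e Rt Rs = 1" by (simp add: Pso_def)
      then show False using that a by simp
    qed
    then have gt: "Rt - Rs > 0" using that by simp
    define b where "b = 2 powr (Rt - Rs) - 1"
    have bpos: "b > 0" using gt by (simp add: b_def)
    have "real N * K1 \<alpha> lam_e * G b \<le> real N * K1 \<alpha> lam_e * G bs"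
      using Pso_iff[OF b_def bpos] that NKd Gbs by simp
    then have "G b \<le> G bs" using Npos K1pos by simp
    then have "\<not> b < bs" using Gdec[OF bpos] by force
    then have "2 powr Re_opt \<le> 2 powr (Rt - Rs)" using pRe by (simp add: b_def)
    then show ?thesis by simp
  qed
  have k: "K4 > 0" unfolding K4_def using a by (intro divide_pos_pos mult_pos_pos) (auto intro: add_nonneg_pos)
  define w2 where "w2 = lambertW0 (2 powr (- Re_opt) / K4)"
  have w2: "w2 > 0" "w2 * exp w2 = 2 powr (- Re_opt) / K4"
    using lambertW0_pos[of "2 powr (- Re_opt) / K4"] k by (auto simp: w2_def)
  have Rs_pos: "Rs_opt > 0" using w2 by (simp add: Rs_opt_def w2_def)
  have Rt_gt: "Rt_opt > Re_opt" using Rs_pos by (simp add: Rt_opt_def)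
  have crit: "1/(Rt_opt - Re_opt) - K4 * 2 powr Rt_opt * ln 2 = 0"
  proof -
    have "2 powr Rt_opt = 2 powr Re_opt * exp w2"
      by (simp add: Rt_opt_def Rs_opt_def w2_def powr_add) (simp add: powr_def)
    moreover have "exp w2 = 2 powr (- Re_opt) / (K4 * w2)" using w2 k by (simp add: field_simps)
    moreover have "2 powr Re_opt * 2 powr (- Re_opt) = 1" by (simp flip: powr_add)
    ultimately have "K4 * 2 powr Rt_opt * ln 2 = ln 2 / w2" using k w2 by (simp add: field_simps)
    then show ?thesis by (simp add: Rt_opt_def Rs_opt_def w2_def)
  qed
  define \<Phi> where "\<Phi> = (\<lambda>x. ln (x - Re_opt) - K4 * 2 powr x)"
  have Urep: "U x = exp (\<Phi> x) * (exp K4 / real N)" if "x > Re_opt" for x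
    using that by (simp add: U_def \<Phi>_def exp_diff algebra_simps exp_add flip: exp_add)
  have strict: "U x < U Rt_opt" if "x > Re_opt" "x \<noteq> Rt_opt" for x
  proof -
    have "\<Phi> x < \<Phi> Rt_opt" using tangent(2)[OF Rt_gt that(1) k that(2)] crit by (simp add: \<Phi>_def)
    then have "exp (\<Phi> x) * (exp K4 / real N) < exp (\<Phi> Rt_opt) * (exp K4 / real N)"
      using Npos by (intro mult_strict_right_mono) auto
    then show ?thesis using Urep[OF that(1)] Urep[OF Rt_gt] by simp
  qed
  have qc: "quasiconcave_on {Re_opt<..} U"
    unfolding quasiconcave_on_def
  proof (intro ballI allI impI)
    fix x y t assume x: "x \<in> {Re_opt<..}" and y: "y \<in> {Re_opt<..}"
      and t: "0 \<le> t \<and> t \<le> 1" and z: "(1 - t) *\<^sub>R x + t *\<^sub>R y \<in> {Re_opt<..}"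
    define z where "z = (1 - t) * x + t * y"
    have zR: "z > Re_opt" using z by (simp add: z_def)
    define D where "D = 1/(z-Re_opt) - K4 * 2 powr z * ln 2"
    have tx: "\<Phi> x \<le> \<Phi> z + (x - z) * D" using tangent(1)[OF zR _ k, of x] x by (simp add: \<Phi>_def D_def)
    have ty: "\<Phi> y \<le> \<Phi> z + (y - z) * D" using tangent(1)[OF zR _ k, of y] y by (simp add: \<Phi>_def D_def)
    have "(1-t) * \<Phi> x + t * \<Phi> y \<le> (1-t) * (\<Phi> z + (x - z) * D) + t * (\<Phi> z + (y - z) * D)"
      using t tx ty by (intro add_mono mult_left_mono) auto
    also have "\<dots> = \<Phi> z" by (simp add: z_def algebra_simps)
    finally have comb: "(1-t) * \<Phi> x + t * \<Phi> y \<le> \<Phi> z" .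
    have "min (\<Phi> x) (\<Phi> y) \<le> \<Phi> z"
    proof (cases "\<Phi> x \<le> \<Phi> y")
      case True
      have "t * (\<Phi> y - \<Phi> x) \<ge> 0" using t True by simp
      then show ?thesis using comb True by (simp add: algebra_simps)
    next
      case False
      have "(1-t) * (\<Phi> x - \<Phi> y) \<ge> 0" using t False by simp
      then show ?thesis using comb False by (simp add: algebra_simps)
    qed
    have mono: "U a \<le> U b" if "a > Re_opt" "b > Re_opt" "\<Phi> a \<le> \<Phi> b" for a b
    proof -
      have "exp (\<Phi> a) * (exp K4 / real N) \<le> exp (\<Phi> b) * (exp K4 / real N)"
        using Npos that by (intro mult_right_mono) auto
      then show ?thesis using Urep[OF that(1)] Urep[OF that(2)] by simp
    qed
    have "\<Phi> x \<le> \<Phi> z \<or> \<Phi> y \<le> \<Phi> z" using \<open>min (\<Phi> x) (\<Phi> y) \<le> \<Phi> z\<close> by linarith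
    then have "min (U x) (U y) \<le> U z"
      using mono[OF _ zR, of x] mono[OF _ zR, of y] x y by force
    then show "min (U x) (U y) \<le> U ((1 - t) *\<^sub>R x + t *\<^sub>R y)" by (simp add: z_def)
  qed
  have Uno: "U_NOFT N L \<alpha> p Rt Rs = exp (- K4 * (2 powr Rt - 1)) * Rs / real N" for Rt Rs
    by (simp add: U_NOFT_def Pc_def K4_def)
  have opt_Pso: "Pso N \<alpha> p lam_e Rt_opt Rs_opt \<le> \<epsilon>"
  proof -
    have "bs = 2 powr (Rt_opt - Rs_opt) - 1" using pRe by (simp add: Rt_opt_def)
    from Pso_iff[OF this bspos] show ?thesis using Gbs NKd by simp
  qed
  have main: "U_NOFT N L \<alpha> p Rt Rs \<le> U_NOFT N L \<alpha> p Rt_opt Rs_opt"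
    if "Rt \<ge> Rs" "Rs > 0" "Pso N \<alpha> p lam_e Rt Rs \<le> \<epsilon>" for Rt Rs
  proof -
    have c1: "Rs \<le> Rt - Re_opt" using constr[OF that] by simp
    have RtR: "Rt > Re_opt" using c1 that by simp
    have "U_NOFT N L \<alpha> p Rt Rs \<le> U Rt"
      unfolding Uno U_def using c1 Npos
      by (intro divide_right_mono) (auto simp: mult.commute intro: mult_left_mono)
    also have "\<dots> \<le> U Rt_opt" using strict[OF RtR] by (cases "Rt = Rt_opt") auto
    also have "\<dots> = U_NOFT N L \<alpha> p Rt_opt Rs_opt" unfolding Uno U_def by (simp add: Rt_opt_def mult.commute)
    finally show ?thesis .
  qed
  show ?thesis
    using qc Rt_gt strict Rs_pos Repos opt_Pso main by (auto simp: Rt_opt_def)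
qed

end
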